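(* Let $z_1,\dots,z_{N+1}$ be distinct points on the unit circle and let $\Phi_0,\dots,\Phi_N$ be the monic orthogonal polynomials with respect to the measure $\frac{1}{N+1}\sum_{s=1}^{N+1}\delta_{z_s}$ (equal masses), with Verblunsky parameters $a_0,\dots,a_{N-1}$ ($|a_k|<1$), completed by $\Phi_{N+1}(z)=\prod_{s=1}^{N+1}(z-z_s)=z\Phi_N(z)-\overline{a_N}\Phi_N^*(z)$ with $|a_N|=1$. Let $\tilde\Phi_0,\dots,\tilde\Phi_{N+1}$ be the mirror-dual system, i.e. the monic polynomials generated by the Szegő recurrence from $\tilde a_n=-a_N\overline{a_{N-n-1}}$, $n=0,\dots,N$ (with $a_{-1}=-1$). Then $\tilde\Phi_{N+1}=\Phi_{N+1}$ and $$\tilde\Phi_N(z)=\frac{1}{N+1}\,\Phi_{N+1}'(z),$$ i.e. the mirror-dual system is the Sturmian POPUC system associated with $\Phi_{N+1}$; equivalently its orthogonality weights are proportional to $1/|\Phi_{N+1}'(z_s)|^2$.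
   Context: Szegő recurrence: $\Phi_0=1$, $\Phi_{n+1}(z)=z\Phi_n(z)-\overline{a_n}\Phi_n^*(z)$ with $\Phi_n^*(z)=z^n\overline{\Phi_n}(1/z)$ ($\overline{\Phi_n}$ = polynomial with conjugated coefficients); the $a_n$ are the Verblunsky parameters. A POPUC system $\Phi_0,\dots,\Phi_{N+1}$ (with $|a_k|<1$ for $k<N$, $|a_N|=1$) is called Sturmian if $\Phi_N=\Phi_{N+1}'/(N+1)$. *)

theory Defs
  imports "HOL-Computational_Algebra.Polynomial" Complex_Main
begin

text \<open>Reversed polynomial: \<open>p\<^sup>*(z) = z^n * conj(p)(1/z)\<close> for a polynomial p of degree at most n.\<close>
definition poly_star :: "nat \<Rightarrow> complex poly \<Rightarrow> complex poly" where
  "poly_star n p = (\<Sum>k\<le>n. monom (cnj (coeff p k)) (n - k))"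

fun szego :: "(nat \<Rightarrow> complex) \<Rightarrow> nat \<Rightarrow> complex poly" where
  "szego a 0 = 1"
| "szego a (Suc n) = [:0, 1:] * szego a n - smult (cnj (a n)) (poly_star n (szego a n))"

text \<open>Mirror-dual parameters: \<open>\<tilde>a\<^sub>n = - a\<^sub>N conj(a\<^sub>N\<^sub>-\<^sub>n\<^sub>-\<^sub>1)\<close> for n = 0..N, with the
  convention \<open>a\<^sub>-\<^sub>1 = -1\<close> (so \<open>\<tilde>a\<^sub>N = a\<^sub>N\<close>). Values for n > N are irrelevant.\<close>
definition mirror_dual :: "(nat \<Rightarrow> complex) \<Rightarrow> nat \<Rightarrow> nat \<Rightarrow> complex" where
  "mirror_dual a N n = (if n < N then - a N * cnj (a (N - n - 1)) else a N)"

end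

theory Submission
  imports Defs
begin


datatype qm = Q (qa: "complex poly") (qb: "complex poly") (qc: "complex poly") (qd: "complex poly")

fun qmul :: "qm \<Rightarrow> qm \<Rightarrow> qm" where
  "qmul (Q A B C D) (Q A' B' C' D') =
     Q (A*A' + [:0,1:]*B*C') (A*B' + B*D') (C*A' + D*C') ([:0,1:]*C*B' + D*D')"

definition Mq :: "complex \<Rightarrow> qm" where
  "Mq \<alpha> = Q [:0,1:] [:- cnj \<alpha>:] [:- \<alpha>:] 1"

fun U :: "(nat \<Rightarrow> complex) \<Rightarrow> nat \<Rightarrow> qm" where
  "U b 0 = Q 1 0 0 1"
| "U b (Suc n) = qmul (Mq (b n)) (U b n)"

fun Tq :: "complex \<Rightarrow> qm \<Rightarrow> qm" where
  "Tq c (Q A B C D) = Q A (smult (cnj c) C) (smult c B) D"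

lemma qmul_assoc: "qmul (qmul X Y) Z = qmul X (qmul Y Z)"
  by (cases X; cases Y; cases Z) (simp add: algebra_simps)

lemma qmul_id_left: "qmul (Q 1 0 0 1) X = X"
  by (cases X) simp

lemma qmul_id_right: "qmul X (Q 1 0 0 1) = X"
  by (cases X) simp

lemma U_cong: "(\<And>k. k < n \<Longrightarrow> b k = b' k) \<Longrightarrow> U b n = U b' n"
  by (induction n) auto

lemma U_Suc_right: "U b (Suc n) = qmul (U (\<lambda>k. b (Suc k)) n) (Mq (b 0))"
proof (induction n arbitrary: b)
  case 0
  then show ?case by (simp add: qmul_id_left qmul_id_right)
next
  case (Suc n)
  have "U b (Suc (Suc n)) = qmul (Mq (b (Suc n))) (U b (Suc n))" by simp
  also have "\<dots> = qmul (Mq (b (Suc n))) (qmul (U (\<lambda>k. b (Suc k)) n) (Mq (b 0)))"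
    using Suc by simp
  also have "\<dots> = qmul (U (\<lambda>k. b (Suc k)) (Suc n)) (Mq (b 0))"
    by (simp add: qmul_assoc)
  finally show ?case .
qed

lemma Tq_mul: assumes "cnj c * c = 1"
  shows "Tq c (qmul X Y) = qmul (Tq c Y) (Tq c X)"
proof -
  have e: "c * cnj c = 1" using assms by (simp add: mult.commute)
  show ?thesis
    by (cases X; cases Y) (simp add: algebra_simps smult_add_right e assms)
qed

lemma Tq_M: "Tq c (Mq \<beta>) = Mq (c * cnj \<beta>)"
  by (simp add: Mq_def)

lemma U_mirror: assumes "cnj c * c = 1"
  shows "U (\<lambda>k. c * cnj (b (n - 1 - k))) n = Tq c (U b n)"
proof (induction n arbitrary: b)
  case 0
  then show ?case by simp
next
  case (Suc n)
  have "U (\<lambda>k. c * cnj (b (Suc n - 1 - k))) (Suc n)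
      = qmul (Mq (c * cnj (b 0))) (U (\<lambda>k. c * cnj (b (Suc n - 1 - k))) n)" by simp
  also have "U (\<lambda>k. c * cnj (b (Suc n - 1 - k))) n = U (\<lambda>k. c * cnj ((\<lambda>j. b (Suc j)) (n - 1 - k))) n"
    by (rule U_cong) (simp add: Suc_diff_Suc)
  also have "\<dots> = Tq c (U (\<lambda>j. b (Suc j)) n)" by (rule Suc.IH)
  also have "qmul (Mq (c * cnj (b 0))) (Tq c (U (\<lambda>j. b (Suc j)) n)) = Tq c (qmul (U (\<lambda>j. b (Suc j)) n) (Mq (b 0)))"
    by (simp add: Tq_mul[OF assms] Tq_M)
  also have "\<dots> = Tq c (U b (Suc n))" by (simp only: U_Suc_right)
  finally show ?case .
qed

lemma coeff_poly_star: "coeff (poly_star n p) k = (if k \<le> n then cnj (coeff p (n - k)) else 0)"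
proof -
  have "coeff (poly_star n p) k = (\<Sum>j\<le>n. if j = n - k \<and> k \<le> n then cnj (coeff p j) else 0)"
    unfolding poly_star_def coeff_sum coeff_monom
    by (rule sum.cong) auto
  also have "\<dots> = (if k \<le> n then cnj (coeff p (n - k)) else 0)"
    by (cases "k \<le> n") (simp_all add: sum.delta')
  finally show ?thesis .
qed

lemma degree_poly_star: "degree (poly_star n p) \<le> n"
  by (rule degree_le) (simp add: coeff_poly_star)

lemma X_mult: "[:0,1:] * (p :: complex poly) = pCons 0 p"
  by (simp add: mult_pCons_left)

lemma p0_add: "pCons (0::complex) (p + q) = pCons 0 p + pCons 0 q" by simp
lemma p0_diff: "pCons (0::complex) (p - q) = pCons 0 p - pCons 0 q" by simp

lemma poly_star_step:
  assumes "degree p \<le> n"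
  shows "poly_star (Suc n) ([:0,1:] * p - smult (cnj \<alpha>) (poly_star n p))
       = poly_star n p - smult \<alpha> ([:0,1:] * p)"
proof (rule poly_eqI)
  fix k
  have hp: "\<And>j. j > n \<Longrightarrow> coeff p j = 0" using assms by (simp add: coeff_eq_0)
  show "coeff (poly_star (Suc n) ([:0,1:] * p - smult (cnj \<alpha>) (poly_star n p))) k
      = coeff (poly_star n p - smult \<alpha> ([:0,1:] * p)) k"
    unfolding X_mult
    apply (cases k)
     apply (auto simp: coeff_poly_star coeff_pCons hp Suc_diff_le split: nat.split)
    by (rule arg_cong[where f="coeff p"]) arith
qed

lemma degree_szego: "degree (szego b n) \<le> n"
proof (induction n)
  case 0 then show ?case by simp
next
  case (Suc n)
  have "degree ([:0,1:] * szego b n) \<le> Suc n"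
    using Suc by (simp add: X_mult)
  moreover have "degree (smult (cnj (b n)) (poly_star n (szego b n))) \<le> Suc n"
    using degree_poly_star[of n] by (meson degree_smult_le le_Suc_eq order_trans)
  ultimately show ?case by (simp add: degree_diff_le)
qed

lemma szego_U: "szego b n = qa (U b n) + qb (U b n)
   \<and> poly_star n (szego b n) = [:0,1:] * qc (U b n) + qd (U b n)"
proof (induction n)
  case 0
  then show ?case by (simp add: poly_star_def)
next
  case (Suc n)
  obtain A B C D where u: "U b n = Q A B C D" by (cases "U b n")
  have e1: "szego b n = A + B" and e2: "poly_star n (szego b n) = [:0,1:] * C + D"
    using Suc u by auto
  have s: "poly_star (Suc n) (szego b (Suc n)) = poly_star n (szego b n) - smult (b n) ([:0,1:] * szego b n)"
    using poly_star_step[OF degree_szego] by simp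
  have s': "poly_star (Suc n) (szego b (Suc n)) = [:0,1:] * C + D - smult (b n) ([:0,1:] * (A + B))"
    using s by (subst (asm) e2, subst (asm) e1)
  have s1: "szego b (Suc n) = [:0,1:] * (A + B) - smult (cnj (b n)) ([:0,1:] * C + D)"
    by (simp only: szego.simps e2, subst e1, rule refl)
  show ?case
    apply (rule conjI)
     apply (subst s1)
     apply (simp add: u Mq_def algebra_simps smult_add_right smult_diff_right)
    apply (subst s')
    apply (simp add: u Mq_def algebra_simps smult_add_right smult_diff_right)
    done
qed



lemma sd_unique:
  fixes p q :: "complex poly"
  assumes "[:-c,1:] * q + [:poly p c:] = p"
  shows "synthetic_div p c = q"
proof -
  have "[:-c,1:] * synthetic_div p c + [:poly p c:] = [:-c,1:] * q + [:poly p c:]"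
    using assms synthetic_div_correct'[of c p] by simp
  then have "[:-c,1:] * synthetic_div p c = [:-c,1:] * q" by (rule add_right_imp_eq)
  moreover have nz: "[:-c,1:] \<noteq> (0::complex poly)" by simp
  ultimately show ?thesis by (metis mult_left_cancel)
qed

lemma sd_diff: "synthetic_div (p - q :: complex poly) c = synthetic_div p c - synthetic_div q c"
proof (rule sd_unique)
  have "[:- c, 1:] * synthetic_div p c + [:poly p c:] = p" "[:- c, 1:] * synthetic_div q c + [:poly q c:] = q"
    by (rule synthetic_div_correct')+
  then have "p - q = ([:-c,1:] * synthetic_div p c + [:poly p c:]) - ([:-c,1:] * synthetic_div q c + [:poly q c:])"
    by simp
  also have "\<dots> = [:-c,1:] * (synthetic_div p c - synthetic_div q c) + ([:poly p c:] - [:poly q c:])"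
    by algebra
  also have "[:poly p c:] - [:poly q c:] = [:poly (p - q) c:]" by simp
  finally show "[:- c, 1:] * (synthetic_div p c - synthetic_div q c) + [:poly (p - q) c:] = p - q"
    by simp
qed

lemma sd_smult: "synthetic_div (smult a (p :: complex poly)) c = smult a (synthetic_div p c)"
proof (rule sd_unique)
  have "[:- c, 1:] * synthetic_div p c + [:poly p c:] = p"
    by (rule synthetic_div_correct')
  then have "smult a ([:- c, 1:] * synthetic_div p c + [:poly p c:]) = smult a p" by simp
  then show "[:- c, 1:] * smult a (synthetic_div p c) + [:poly (smult a p) c:] = smult a p"
    by (simp add: smult_add_right)
qed

lemma sd_X: "synthetic_div ([:0,1:] * (p :: complex poly)) c = [:0,1:] * synthetic_div p c + [:poly p c:]"
  by (simp add: X_mult)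

lemma const_sum: "(\<Sum>s\<in>I. [:f s :: complex:]) = [:\<Sum>s\<in>I. f s:]"
  by (induction I rule: infinite_finite_induct) auto

lemma smult_sum_right: "smult c (\<Sum>s\<in>I. f s) = (\<Sum>s\<in>I. smult c (f s :: complex poly))"
  by (induction I rule: infinite_finite_induct) (auto simp: smult_add_right)

definition SS :: "nat set \<Rightarrow> complex \<Rightarrow> (nat \<Rightarrow> complex) \<Rightarrow> complex poly \<Rightarrow> complex poly" where
  "SS I w z p = (\<Sum>s\<in>I. smult w (synthetic_div p (z s)))"

definition sig :: "nat set \<Rightarrow> complex \<Rightarrow> (nat \<Rightarrow> complex) \<Rightarrow> complex poly \<Rightarrow> complex" where
  "sig I w z p = (\<Sum>s\<in>I. w * poly p (z s))"

lemma SS_diff: "SS I w z (p - q) = SS I w z p - SS I w z q"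
  by (simp add: SS_def sd_diff smult_diff_right sum_subtractf)

lemma SS_smult: "SS I w z (smult a p) = smult a (SS I w z p)"
  by (simp add: SS_def sd_smult smult_sum_right mult.commute)

lemma SS_X: "SS I w z ([:0,1:] * p) = [:0,1:] * SS I w z p + [:sig I w z p:]"
proof -
  have "SS I w z ([:0,1:] * p) = (\<Sum>s\<in>I. [:0,1:] * smult w (synthetic_div p (z s)) + [:w * poly p (z s):])"
    unfolding SS_def sd_X by (rule sum.cong) (simp_all only: smult_add_right mult_smult_right smult_pCons smult_0_right mult_0_right)
  also have "\<dots> = [:0,1:] * SS I w z p + [:sig I w z p:]"
    unfolding sum.distrib const_sum SS_def sig_def sum_distrib_left ..
  finally show ?thesis .
qed

lemma SS_one: "SS I w z 1 = 0"
  by (simp add: SS_def one_pCons)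

lemma col_formula:
  assumes sig0: "\<And>n. 1 \<le> n \<Longrightarrow> n \<le> N \<Longrightarrow> sig I w z (szego a n) = 0"
    and sig1: "sig I w z 1 = 1"
  shows "n \<le> N \<Longrightarrow> qa (U a n) = [:0,1:] * SS I w z (szego a n) + [:sig I w z (szego a n):]
      \<and> qc (U a n) = SS I w z (poly_star n (szego a n))"
proof (induction n)
  case 0
  then show ?case using sig1 by (simp add: SS_one poly_star_def)
next
  case (Suc n)
  obtain A B C D where u: "U a n = Q A B C D" by (cases "U a n")
  let ?P = "szego a n" and ?Ps = "poly_star n (szego a n)"
  have ih: "A = [:0,1:] * SS I w z ?P + [:sig I w z ?P:]" "C = SS I w z ?Ps"
    using Suc u by auto
  have s: "poly_star (Suc n) (szego a (Suc n)) = ?Ps - smult (a n) ([:0,1:] * ?P)"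
    using poly_star_step[OF degree_szego] by simp
  have s1: "szego a (Suc n) = [:0,1:] * ?P - smult (cnj (a n)) ?Ps" by simp
  have z: "sig I w z (szego a (Suc n)) = 0" using sig0[of "Suc n"] Suc.prems by simp
  have e1: "SS I w z (szego a (Suc n)) = [:0,1:] * SS I w z ?P + [:sig I w z ?P:] - smult (cnj (a n)) (SS I w z ?Ps)"
    unfolding s1 SS_diff SS_smult SS_X ..
  have e2: "SS I w z (poly_star (Suc n) (szego a (Suc n))) = SS I w z ?Ps - smult (a n) ([:0,1:] * SS I w z ?P + [:sig I w z ?P:])"
    unfolding s SS_diff SS_smult SS_X ..
  show ?case
    unfolding e1 e2 z
    by (simp add: u Mq_def ih algebra_simps smult_add_right smult_diff_right)
qed



lemma SS_prod:
  fixes z :: "nat \<Rightarrow> complex"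
  assumes "finite I" and "s0 \<in> I"
  shows "synthetic_div (\<Prod>t\<in>I. [:- z t, 1:]) (z s0) = (\<Prod>t\<in>I-{s0}. [:- z t, 1:])"
proof (rule sd_unique[where c="z s0"])
  have "poly (\<Prod>t\<in>I. [:- z t, 1:]) (z s0) = 0"
    using assms by (auto simp: poly_prod)
  moreover have "(\<Prod>t\<in>I. [:- z t, 1:]) = [:- z s0, 1:] * (\<Prod>t\<in>I-{s0}. [:- z t, 1:])"
    using assms by (simp add: prod.remove)
  ultimately show "[:- z s0, 1:] * (\<Prod>t\<in>I-{s0}. [:- z t, 1:]) + [:poly (\<Prod>t\<in>I. [:- z t, 1:]) (z s0):]
      = (\<Prod>t\<in>I. [:- z t, 1:])" by simp
qed

theorem corollary1:
  fixes N :: nat and z :: "nat \<Rightarrow> complex" and a :: "nat \<Rightarrow> complex"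
  assumes distinct: "inj_on z {1..N+1}"
    and on_circle: "\<And>s. s \<in> {1..N+1} \<Longrightarrow> norm (z s) = 1"
    and a_in_disk: "\<And>k. k < N \<Longrightarrow> norm (a k) < 1"
    and a_N: "norm (a N) = 1"
    and orth: "\<And>m n. m < n \<Longrightarrow> n \<le> N \<Longrightarrow>
        (\<Sum>s\<in>{1..N+1}. (1 / of_nat (N+1)) * poly (szego a n) (z s) * cnj (poly (szego a m) (z s))) = 0"
    and last: "szego a (N+1) = (\<Prod>s\<in>{1..N+1}. [:- z s, 1:])"
  shows "szego (mirror_dual a N) (N+1) = szego a (N+1)
       \<and> szego (mirror_dual a N) N = smult (1 / of_nat (N+1)) (pderiv (szego a (N+1)))"
proof -
  define I where "I = {1..N+1}"
  define w :: complex where "w = 1 / of_nat (N+1)"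
  define c where "c = - a N"
  have aa1: "cnj (a N) * a N = 1"
    using a_N by (metis complex_norm_square mult.commute of_real_1 power_one)
  have aa2: "a N * cnj (a N) = 1" using aa1 by (simp add: mult.commute)
  have cc: "cnj c * c = 1" using aa1 by (simp add: c_def)
  have mir: "U (mirror_dual a N) N = Tq c (U a N)"
  proof -
    have "U (mirror_dual a N) N = U (\<lambda>k. c * cnj (a (N - 1 - k))) N"
      by (rule U_cong) (simp add: mirror_dual_def c_def)
    also have "\<dots> = Tq c (U a N)" by (rule U_mirror[OF cc])
    finally show ?thesis .
  qed
  obtain A B C D where u: "U a N = Q A B C D" by (cases "U a N")
  have sa: "szego a N = A + B" "poly_star N (szego a N) = [:0,1:] * C + D"
    using szego_U[of a N] u by auto
  have sN1: "szego a (N+1) = [:0,1:] * (A + B) - smult (cnj (a N)) ([:0,1:] * C + D)"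
    by (simp only: Suc_eq_plus1[symmetric] szego.simps sa(2), subst sa(1), rule refl)
  have md: "mirror_dual a N N = a N" by (simp add: mirror_dual_def)
  have t1: "szego (mirror_dual a N) (N+1) = szego a (N+1)"
  proof -
    have "szego (mirror_dual a N) (N+1) = qa (U (mirror_dual a N) (N+1)) + qb (U (mirror_dual a N) (N+1))"
      using szego_U by blast
    also have "\<dots> = qa (qmul (Mq (a N)) (Tq c (Q A B C D))) + qb (qmul (Mq (a N)) (Tq c (Q A B C D)))"
      by (simp add: mir md u)
    also have "\<dots> = szego a (N+1)"
      unfolding sN1 by (simp add: Mq_def c_def algebra_simps aa1 aa2 smult_add_right smult_diff_right)
    finally show ?thesis .
  qed
  have tN: "szego (mirror_dual a N) N = A - smult (cnj (a N)) C"
  proof -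
    have "szego (mirror_dual a N) N = qa (U (mirror_dual a N) N) + qb (U (mirror_dual a N) N)"
      using szego_U by blast
    also have "\<dots> = A - smult (cnj (a N)) C"
      by (simp add: mir u c_def)
    finally show ?thesis .
  qed
  have sig0: "sig I w z (szego a n) = 0" if "1 \<le> n" "n \<le> N" for n
    using orth[of 0 n] that by (simp add: sig_def I_def w_def)
  have cardI: "card I = N + 1" by (simp add: I_def)
  have hn: "of_nat (N+1) \<noteq> (0::complex)" by (simp only: of_nat_eq_0_iff)
  have sig1: "sig I w z 1 = 1"
    using hn by (simp add: sig_def cardI w_def del: of_nat_Suc of_nat_add)
  have col: "A = [:0,1:] * SS I w z (szego a N) + [:sig I w z (szego a N):]"
            "C = SS I w z (poly_star N (szego a N))"
    using col_formula[of N I w z a N, OF sig0 sig1] u by auto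
  have "A - smult (cnj (a N)) C = SS I w z (szego a (N+1))"
  proof -
    have "szego a (N+1) = [:0,1:] * szego a N - smult (cnj (a N)) (poly_star N (szego a N))" by simp
    then have "SS I w z (szego a (N+1)) = [:0,1:] * SS I w z (szego a N) + [:sig I w z (szego a N):]
        - smult (cnj (a N)) (SS I w z (poly_star N (szego a N)))"
      by (simp only: SS_diff SS_smult SS_X)
    then show ?thesis using col by simp
  qed
  also have "SS I w z (szego a (N+1)) = smult w (pderiv (szego a (N+1)))"
  proof -
    have fin: "finite I" by (simp add: I_def)
    have "SS I w z (szego a (N+1)) = (\<Sum>s\<in>I. smult w (\<Prod>t\<in>I-{s}. [:- z t, 1:]))"
      unfolding SS_def last I_def[symmetric]
      by (rule sum.cong) (simp_all add: SS_prod[OF fin])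
    also have "\<dots> = smult w (pderiv (szego a (N+1)))"
      unfolding last I_def[symmetric] pderiv_prod smult_sum_right by (simp add: pderiv_pCons)
    finally show ?thesis .
  qed
  finally show ?thesis using t1 tN by (simp add: w_def)
qed

end
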